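(* Assume there exists a decomposition of $V$ which is split with respect to the orderings $E_0,\ldots,E_d$ and $E^*_0,\ldots,E^*_d$. Then $A,A^*$ is a Leonard pair if and only if $(A;A^*;\{E_i\}_{i=0}^d;\{E^*_i\}_{i=0}^d)$ is a Leonard system.
   Context: Let $\mathbb K$ be a field, $d\ge 0$ an integer, and $\mathcal A$ a $\mathbb K$-algebra isomorphic to $\mathrm{Mat}_{d+1}(\mathbb K)$, with identity $I$. An element of $\mathcal A$ is multiplicity-free if it has $d+1$ mutually distinct eigenvalues, all in $\mathbb K$; for such $A$ with eigenvalues $\theta_0,\ldots,\theta_d$, the primitive idempotent associated with $\theta_i$ is $E_i=\prod_{j\ne i}(A-\theta_jI)/(\theta_i-\theta_j)$. Standing setup: $A,A^*$ are multiplicity-free elements of $\mathcal A$ ($A^*$ is just a name, not an adjoint); $E_0,\ldots,E_d$ is an ordering of the primitive idempotents of $A$ and $\theta_i$ is the eigenvalue of $A$ for $E_i$; $E^*_0,\ldots,E^*_d$ is an ordering of the primitive idempotents of $A^*$ and $\theta^*_i$ is the eigenvalue of $A^*$ for $E^*_i$; $V$ is an irreducible left $\mathcal A$-module. A decomposition of $V$ is a sequence $U_0,\ldots,U_d$ of 1-dimensional subspaces with $V=U_0+\cdots+U_d$ (direct sum); it is split (with respect to the orderings $E_0,\ldots,E_d$ and $E^*_0,\ldots,E^*_d$) if $(A-\theta_iI)U_i=U_{i+1}$ for $0\le i\le d-1$, $(A-\theta_dI)U_d=0$, $(A^*-\theta^*_iI)U_i=U_{i-1}$ for $1\le i\le d$,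 and $(A^*-\theta^*_0I)U_0=0$. A square matrix is tridiagonal if every nonzero entry lies on the diagonal, subdiagonal or superdiagonal, and irreducible tridiagonal if moreover all sub- and superdiagonal entries are nonzero. $A,A^*$ is a Leonard pair if there is a basis of $V$ in which $A$ is irreducible tridiagonal and $A^*$ diagonal, and a basis of $V$ in which $A^*$ is irreducible tridiagonal and $A$ diagonal. The sequence $(A;A^*;\{E_i\};\{E^*_i\})$ is a Leonard system if for all $0\le i,j\le d$: $E^*_iAE^*_j=0$ if $|i-j|>1$, $E^*_iAE^*_j\ne0$ if $|i-j|=1$, $E_iA^*E_j=0$ if $|i-j|>1$, and $E_iA^*E_j\ne0$ if $|i-j|=1$. *)

theory Defs
  imports "Jordan_Normal_Form.Matrix" "Jordan_Normal_Form.Char_Poly"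
begin

text \<open>Concrete model: the algebra is Mat_(d+1)(K) (matrices of carrier_mat (d+1) (d+1)),
  and V is the irreducible module carrier_vec (d+1) of column vectors.\<close>

definition mult_free :: "nat \<Rightarrow> 'a::field mat \<Rightarrow> bool" where
  "mult_free d A \<longleftrightarrow> (\<exists>\<theta>. inj_on \<theta> {..d} \<and> (\<forall>i\<le>d. eigenvalue A (\<theta> i)))"

definition prim_idem :: "nat \<Rightarrow> 'a::field mat \<Rightarrow> (nat \<Rightarrow> 'a) \<Rightarrow> nat \<Rightarrow> 'a mat" where
  "prim_idem d A \<theta> i =
     foldr (\<lambda>j M. ((1 / (\<theta> i - \<theta> j)) \<cdot>\<^sub>m (A - \<theta> j \<cdot>\<^sub>m 1\<^sub>m (Suc d))) * M)
           (filter (\<lambda>j. j \<noteq> i) [0..<Suc d]) (1\<^sub>m (Suc d))"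

definition is_decomposition :: "nat \<Rightarrow> (nat \<Rightarrow> 'a::field vec set) \<Rightarrow> bool" where
  "is_decomposition d U \<longleftrightarrow>
     (\<forall>i\<le>d. \<exists>u. u \<in> carrier_vec (Suc d) \<and> u \<noteq> 0\<^sub>v (Suc d) \<and> U i = {c \<cdot>\<^sub>v u | c. True}) \<and>
     (\<forall>v \<in> carrier_vec (Suc d). \<exists>!x. (\<forall>i. i > d \<longrightarrow> x i = 0\<^sub>v (Suc d)) \<and>
          (\<forall>i\<le>d. x i \<in> U i) \<and> v = finsum_vec TYPE('a) (Suc d) x {0..d})"

definition split_decomposition ::
  "nat \<Rightarrow> 'a::field mat \<Rightarrow> 'a mat \<Rightarrow> (nat \<Rightarrow> 'a) \<Rightarrow> (nat \<Rightarrow> 'a) \<Rightarrow> (nat \<Rightarrow> 'a vec set) \<Rightarrow> bool" where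
  "split_decomposition d A As \<theta> \<theta>s U \<longleftrightarrow> is_decomposition d U \<and>
     (\<forall>i<d. (\<lambda>v. (A - \<theta> i \<cdot>\<^sub>m 1\<^sub>m (Suc d)) *\<^sub>v v) ` U i = U (Suc i)) \<and>
     (\<lambda>v. (A - \<theta> d \<cdot>\<^sub>m 1\<^sub>m (Suc d)) *\<^sub>v v) ` U d = {0\<^sub>v (Suc d)} \<and>
     (\<forall>i. 1 \<le> i \<and> i \<le> d \<longrightarrow> (\<lambda>v. (As - \<theta>s i \<cdot>\<^sub>m 1\<^sub>m (Suc d)) *\<^sub>v v) ` U i = U (i - 1)) \<and>
     (\<lambda>v. (As - \<theta>s 0 \<cdot>\<^sub>m 1\<^sub>m (Suc d)) *\<^sub>v v) ` U 0 = {0\<^sub>v (Suc d)}"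

definition tridiagonal :: "'a::zero mat \<Rightarrow> bool" where
  "tridiagonal M \<longleftrightarrow> (\<forall>i<dim_row M. \<forall>j<dim_col M. (i > j + 1 \<or> j > i + 1) \<longrightarrow> M $$ (i,j) = 0)"

definition irred_tridiagonal :: "'a::zero mat \<Rightarrow> bool" where
  "irred_tridiagonal M \<longleftrightarrow> tridiagonal M \<and>
     (\<forall>i. i + 1 < dim_row M \<longrightarrow> M $$ (i+1, i) \<noteq> 0 \<and> M $$ (i, i+1) \<noteq> 0)"

text \<open>Matrix of A w.r.t. the basis formed by the columns of an invertible P is Q * A * P, Q = P^-1.\<close>
definition leonard_pair :: "nat \<Rightarrow> 'a::field mat \<Rightarrow> 'a mat \<Rightarrow> bool" where
  "leonard_pair d A As \<longleftrightarrow>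
     (\<exists>P Q. P \<in> carrier_mat (Suc d) (Suc d) \<and> Q \<in> carrier_mat (Suc d) (Suc d) \<and>
        P * Q = 1\<^sub>m (Suc d) \<and> Q * P = 1\<^sub>m (Suc d) \<and>
        irred_tridiagonal (Q * A * P) \<and> diagonal_mat (Q * As * P)) \<and>
     (\<exists>P Q. P \<in> carrier_mat (Suc d) (Suc d) \<and> Q \<in> carrier_mat (Suc d) (Suc d) \<and>
        P * Q = 1\<^sub>m (Suc d) \<and> Q * P = 1\<^sub>m (Suc d) \<and>
        irred_tridiagonal (Q * As * P) \<and> diagonal_mat (Q * A * P))"

definition leonard_system ::
  "nat \<Rightarrow> 'a::field mat \<Rightarrow> 'a mat \<Rightarrow> (nat \<Rightarrow> 'a mat) \<Rightarrow> (nat \<Rightarrow> 'a mat) \<Rightarrow> bool" where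
  "leonard_system d A As E Es \<longleftrightarrow>
     (\<forall>i\<le>d. \<forall>j\<le>d.
        ((i > j + 1 \<or> j > i + 1) \<longrightarrow> Es i * A * Es j = 0\<^sub>m (Suc d) (Suc d)) \<and>
        ((i = j + 1 \<or> j = i + 1) \<longrightarrow> Es i * A * Es j \<noteq> 0\<^sub>m (Suc d) (Suc d)) \<and>
        ((i > j + 1 \<or> j > i + 1) \<longrightarrow> E i * As * E j = 0\<^sub>m (Suc d) (Suc d)) \<and>
        ((i = j + 1 \<or> j = i + 1) \<longrightarrow> E i * As * E j \<noteq> 0\<^sub>m (Suc d) (Suc d)))"

end

theory Submission
  imports Defs
begin

lemma foldr_idem_carrier:
  assumes M: "M \<in> carrier_mat n n"
  shows "foldr (\<lambda>j X. (s j \<cdot>\<^sub>m (M - t j \<cdot>\<^sub>m 1\<^sub>m n)) * X) L (1\<^sub>m n) \<in> carrier_mat n n"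
  by (induction L) (use M in auto)

lemma foldr_idem_vec:
  fixes M :: "'a::field mat"
  assumes M: "M \<in> carrier_mat n n" and w: "w \<in> carrier_vec n" and ev: "M *\<^sub>v w = \<mu> \<cdot>\<^sub>v w"
  shows "foldr (\<lambda>j X. (s j \<cdot>\<^sub>m (M - t j \<cdot>\<^sub>m 1\<^sub>m n)) * X) L (1\<^sub>m n) *\<^sub>v w
     = prod_list (map (\<lambda>j. s j * (\<mu> - t j)) L) \<cdot>\<^sub>v w"
proof (induction L)
  case Nil
  then show ?case using w by (simp del: one_smult_vec add: one_smult_vec[where 'a='a])
next
  case (Cons a L)
  let ?F = "foldr (\<lambda>j X. (s j \<cdot>\<^sub>m (M - t j \<cdot>\<^sub>m 1\<^sub>m n)) * X) L (1\<^sub>m n)"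
  let ?p = "prod_list (map (\<lambda>j. s j * (\<mu> - t j)) L)"
  have F: "?F \<in> carrier_mat n n" by (rule foldr_idem_carrier[OF M])
  have S: "s a \<cdot>\<^sub>m (M - t a \<cdot>\<^sub>m 1\<^sub>m n) \<in> carrier_mat n n" using M by auto
  have "(s a \<cdot>\<^sub>m (M - t a \<cdot>\<^sub>m 1\<^sub>m n) * ?F) *\<^sub>v w = (s a \<cdot>\<^sub>m (M - t a \<cdot>\<^sub>m 1\<^sub>m n)) *\<^sub>v (?F *\<^sub>v w)"
    using F S w by simp
  also have "\<dots> = (s a \<cdot>\<^sub>m (M - t a \<cdot>\<^sub>m 1\<^sub>m n)) *\<^sub>v (?p \<cdot>\<^sub>v w)" using Cons by simp
  also have "\<dots> = (s a * (\<mu> - t a) * ?p) \<cdot>\<^sub>v w"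
  proof (rule eq_vecI)
    fix i assume i: "i < dim_vec ((s a * (\<mu> - t a) * ?p) \<cdot>\<^sub>v w)"
    hence i': "i < n" using w by simp
    have "(M *\<^sub>v w) $ i = \<mu> * w $ i" using ev i' w by simp
    hence r: "row M i \<bullet> w = \<mu> * w $ i" using i' M by simp
    have "row (s a \<cdot>\<^sub>m (M - t a \<cdot>\<^sub>m 1\<^sub>m n)) i \<bullet> (?p \<cdot>\<^sub>v w)
       = s a * ?p * (row M i \<bullet> w - t a * w $ i)"
    proof -
      have "row (s a \<cdot>\<^sub>m (M - t a \<cdot>\<^sub>m 1\<^sub>m n)) i = s a \<cdot>\<^sub>v (row M i - t a \<cdot>\<^sub>v unit_vec n i)"
        using M i' by (auto intro!: eq_vecI)
      moreover have "(s a \<cdot>\<^sub>v (row M i - t a \<cdot>\<^sub>v unit_vec n i)) \<bullet> (?p \<cdot>\<^sub>v w)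
          = s a * ?p * (row M i \<bullet> w - t a * w $ i)"
      proof -
        have r1: "row M i \<in> carrier_vec n" using M by auto
        have r2: "t a \<cdot>\<^sub>v unit_vec n i \<in> carrier_vec n" by auto
        have e: "(row M i - t a \<cdot>\<^sub>v unit_vec n i) \<bullet> w = row M i \<bullet> w - t a * w $ i"
          using minus_scalar_prod_distrib[OF r1 r2 w] w i' by simp
        have "(s a \<cdot>\<^sub>v (row M i - t a \<cdot>\<^sub>v unit_vec n i)) \<bullet> (?p \<cdot>\<^sub>v w)
           = s a * (?p * ((row M i - t a \<cdot>\<^sub>v unit_vec n i) \<bullet> w))"
          using w M i' by simp
        also have "\<dots> = s a * (?p * (row M i \<bullet> w - t a * w $ i))" by (simp only: e)
        finally show ?thesis by (simp add: algebra_simps)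
      qed
      ultimately show ?thesis by simp
    qed
    then show "((s a \<cdot>\<^sub>m (M - t a \<cdot>\<^sub>m 1\<^sub>m n)) *\<^sub>v (?p \<cdot>\<^sub>v w)) $ i = ((s a * (\<mu> - t a) * ?p) \<cdot>\<^sub>v w) $ i"
      using i' M w r by (simp add: algebra_simps)
  qed (use M w in simp)
  finally show ?case by (simp add: mult.assoc)
qed


lemma prod_list_ones: "(\<forall>j\<in>set L. f j = 1) \<Longrightarrow> prod_list (map f L) = (1::'a::comm_monoid_mult)"
  by (induction L) auto

lemma prim_idem_eigvec:
  fixes M :: "'a::field mat"
  assumes M: "M \<in> carrier_mat (Suc d) (Suc d)" and inj: "inj_on \<theta> {..d}"
    and i: "i \<le> d" and j: "j \<le> d" and w: "w \<in> carrier_vec (Suc d)" and ev: "M *\<^sub>v w = \<theta> j \<cdot>\<^sub>v w"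
  shows "prim_idem d M \<theta> i *\<^sub>v w = (if i = j then w else 0\<^sub>v (Suc d))"
proof -
  let ?L = "filter (\<lambda>j. j \<noteq> i) [0..<Suc d]"
  have "prim_idem d M \<theta> i *\<^sub>v w = prod_list (map (\<lambda>l. 1 / (\<theta> i - \<theta> l) * (\<theta> j - \<theta> l)) ?L) \<cdot>\<^sub>v w"
    unfolding prim_idem_def by (rule foldr_idem_vec[OF M w ev])
  also have "\<dots> = (if i = j then w else 0\<^sub>v (Suc d))"
  proof (cases "i = j")
    case True
    have "prod_list (map (\<lambda>l. 1 / (\<theta> i - \<theta> l) * (\<theta> j - \<theta> l)) ?L) = 1"
    proof (rule prod_list_ones, intro ballI)
      fix l assume "l \<in> set ?L"
      hence l: "l \<le> d" "l \<noteq> i" by (auto simp del: upt_Suc)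
      have "\<theta> i \<noteq> \<theta> l" using inj_onD[OF inj] l i by force
      thus "1 / (\<theta> i - \<theta> l) * (\<theta> j - \<theta> l) = 1" using True by simp
    qed
    then show ?thesis using True by simp
  next
    case False
    have "0 \<in> set (map (\<lambda>l. 1 / (\<theta> i - \<theta> l) * (\<theta> j - \<theta> l)) ?L)"
      using False j by (auto simp del: upt_Suc intro!: image_eqI[of _ _ j])
    hence "prod_list (map (\<lambda>l. 1 / (\<theta> i - \<theta> l) * (\<theta> j - \<theta> l)) ?L) = 0"
      by (simp add: prod_list_zero_iff)
    then show ?thesis using False w by auto
  qed
  finally show ?thesis .
qed

definition diagm :: "nat \<Rightarrow> (nat \<Rightarrow> 'a::zero) \<Rightarrow> 'a mat" where
  "diagm n \<theta> = mat n n (\<lambda>(k,j). if k = j then \<theta> k else 0)"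

definition dunit :: "nat \<Rightarrow> nat \<Rightarrow> 'a::{zero,one} mat" where
  "dunit n i = mat n n (\<lambda>(k,j). if k = i \<and> j = i then 1 else 0)"

lemma assoc_sq: "A \<in> carrier_mat n n \<Longrightarrow> B \<in> carrier_mat n n \<Longrightarrow> C \<in> carrier_mat n n \<Longrightarrow> A * B * C = A * (B * C)"
  by (rule assoc_mult_mat)
lemma mult_sq: "A \<in> carrier_mat n n \<Longrightarrow> B \<in> carrier_mat n n \<Longrightarrow> A * B \<in> carrier_mat n n"
  by simp

lemma diagm_carrier[simp]: "diagm n \<theta> \<in> carrier_mat n n" unfolding diagm_def by auto
lemma dunit_carrier[simp]: "dunit n i \<in> carrier_mat n n" unfolding dunit_def by auto

lemma dunit_dims[simp]: "dim_row (dunit n i) = n" "dim_col (dunit n i) = n" unfolding dunit_def by auto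
lemma diagm_dims[simp]: "dim_row (diagm n \<theta>) = n" "dim_col (diagm n \<theta>) = n" unfolding diagm_def by auto

lemma mult_diagm_right:
  fixes B :: "'a::comm_ring_1 mat"
  assumes B: "B \<in> carrier_mat n n" and k: "k < n" and j: "j < n"
  shows "(B * diagm n \<theta>) $$ (k,j) = B $$ (k,j) * \<theta> j"
  using B k j by (simp add: diagm_def scalar_prod_def if_distrib[of "(*) _"] sum.delta cong: if_cong)

lemma mult_diagm_left:
  fixes B :: "'a::comm_ring_1 mat"
  assumes B: "B \<in> carrier_mat n n" and k: "k < n" and j: "j < n"
  shows "(diagm n \<theta> * B) $$ (k,j) = \<theta> k * B $$ (k,j)"
  using B k j by (simp add: diagm_def scalar_prod_def if_distrib[of "\<lambda>x. x * _"] sum.delta cong: if_cong)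

lemma mult_dunit_right:
  fixes B :: "'a::comm_ring_1 mat"
  assumes B: "B \<in> carrier_mat n n" and k: "k < n" and j: "j < n" and i: "i < n"
  shows "(B * dunit n i) $$ (k,j) = (if j = i then B $$ (k,i) else 0)"
  using B k j i by (simp add: dunit_def scalar_prod_def if_distrib[of "(*) _"] sum.delta cong: if_cong)

lemma mult_dunit_left:
  fixes B :: "'a::comm_ring_1 mat"
  assumes B: "B \<in> carrier_mat n n" and k: "k < n" and j: "j < n" and i: "i < n"
  shows "(dunit n i * B) $$ (k,j) = (if k = i then B $$ (i,j) else 0)"
  using B k j i by (simp add: dunit_def scalar_prod_def if_distrib[of "\<lambda>x. x * _"] sum.delta cong: if_cong)

lemma prim_idem_carrier:
  fixes M :: "'a::field mat"
  assumes "M \<in> carrier_mat (Suc d) (Suc d)"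
  shows "prim_idem d M \<theta> i \<in> carrier_mat (Suc d) (Suc d)"
  unfolding prim_idem_def by (rule foldr_idem_carrier[OF assms])

lemma vec_nonzero_entry:
  assumes "v \<in> carrier_vec n" "v \<noteq> 0\<^sub>v n"
  shows "\<exists>k<n. v $ k \<noteq> 0"
proof (rule ccontr)
  assume "\<not> ?thesis"
  hence "v = 0\<^sub>v n" using assms(1) by (intro eq_vecI) auto
  thus False using assms(2) by simp
qed

lemma diagonalize:
  fixes N :: "'a::field mat"
  assumes N: "N \<in> carrier_mat (Suc d) (Suc d)" and inj: "inj_on \<theta> {..d}"
    and ev: "\<forall>i\<le>d. eigenvalue N (\<theta> i)"
  shows "\<exists>W Wi. W \<in> carrier_mat (Suc d) (Suc d) \<and> Wi \<in> carrier_mat (Suc d) (Suc d) \<and>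
     W * Wi = 1\<^sub>m (Suc d) \<and> Wi * W = 1\<^sub>m (Suc d) \<and> N * W = W * diagm (Suc d) \<theta> \<and>
     (\<forall>i\<le>d. prim_idem d N \<theta> i = W * dunit (Suc d) i * Wi)"
proof -
  define n where "n = Suc d"
  have N': "N \<in> carrier_mat n n" using N n_def by simp
  have "\<forall>i\<in>{..d}. \<exists>v. eigenvector N v (\<theta> i)" using ev unfolding eigenvalue_def by auto
  then obtain w where w: "\<forall>i\<in>{..d}. eigenvector N (w i) (\<theta> i)" by metis
  have wc: "w i \<in> carrier_vec n" "w i \<noteq> 0\<^sub>v n" "N *\<^sub>v w i = \<theta> i \<cdot>\<^sub>v w i" if "i < n" for i
    using w that N' unfolding eigenvector_def n_def by auto
  define W where "W = mat n n (\<lambda>(k,j). w j $ k)"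
  have W: "W \<in> carrier_mat n n" unfolding W_def by auto
  have colW: "col W j = w j" if "j < n" for j
    using wc[OF that] that unfolding W_def by (intro eq_vecI) auto
  have E: "prim_idem d N \<theta> i \<in> carrier_mat n n" for i using prim_idem_carrier[OF N] n_def by simp
  have EW: "prim_idem d N \<theta> i * W = W * dunit n i" if i: "i < n" for i
  proof (rule eq_matI)
    fix k j assume k: "k < dim_row (W * dunit n i)" and j: "j < dim_col (W * dunit n i)"
    hence k': "k < n" and j': "j < n" using W by auto
    have "(prim_idem d N \<theta> i * W) $$ (k,j) = (prim_idem d N \<theta> i *\<^sub>v w j) $ k"
      using E[of i] W k' j' colW[OF j'] by simp
    also have "\<dots> = (if i = j then w j $ k else 0)"
      using prim_idem_eigvec[OF N inj, of i j "w j"] wc[OF j'] i j' k' n_def by auto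
    also have "\<dots> = (W * dunit n i) $$ (k,j)"
      using mult_dunit_right[OF W k' j' i] k' j' i unfolding W_def by auto
    finally show "(prim_idem d N \<theta> i * W) $$ (k,j) = (W * dunit n i) $$ (k,j)" .
  qed (use E W in auto)
  have Winj: "v = 0\<^sub>v n" if v: "v \<in> carrier_vec n" and Wv: "W *\<^sub>v v = 0\<^sub>v n" for v
  proof (rule eq_vecI)
    fix i assume "i < dim_vec (0\<^sub>v n :: 'a vec)"
    hence i: "i < n" by simp
    have "(prim_idem d N \<theta> i * W) *\<^sub>v v = prim_idem d N \<theta> i *\<^sub>v (W *\<^sub>v v)"
      using E[of i] W v by simp
    also have "\<dots> = 0\<^sub>v n" using Wv E[of i] by auto
    finally have z: "(W * dunit n i) *\<^sub>v v = 0\<^sub>v n" using EW[OF i] by simp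
    obtain k where k: "k < n" "w i $ k \<noteq> 0" using vec_nonzero_entry[OF wc(1,2)[OF i]] by blast
    define B where "B = W * dunit n i"
    have Bc: "B \<in> carrier_mat n n" using W unfolding B_def by simp
    have Be: "B $$ (k,j) = (if j = i then W $$ (k,i) else 0)" if "j < n" for j
      unfolding B_def using mult_dunit_right[OF W k(1) that i] .
    have "(B *\<^sub>v v) $ k = (\<Sum>j\<in>{0..<n}. B $$ (k,j) * v $ j)"
      using k Bc v by (simp add: scalar_prod_def)
    also have "\<dots> = (\<Sum>j\<in>{0..<n}. (if j = i then W $$ (k,i) else 0) * v $ j)"
      using Be by (intro sum.cong) auto
    finally have "((W * dunit n i) *\<^sub>v v) $ k = (\<Sum>j\<in>{0..<n}. (if j = i then W $$ (k,i) else 0) * v $ j)"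
      unfolding B_def .
    also have "\<dots> = W $$ (k,i) * v $ i" using i by (simp add: if_distrib[of "\<lambda>x. x * _"] sum.delta cong: if_cong)
    finally have "w i $ k * v $ i = 0" using z k i unfolding W_def by simp
    thus "v $ i = 0\<^sub>v n $ i" using k i by simp
  qed (use v in simp)
  have "det W \<noteq> 0" using Winj det_0_iff_vec_prod_zero[OF W] by blast
  from det_non_zero_imp_unit[OF W this, of "()"]
  obtain Wi where Wi: "Wi \<in> carrier_mat n n" "Wi * W = 1\<^sub>m n" "W * Wi = 1\<^sub>m n"
    unfolding Units_def ring_mat_def by auto
  have NW: "N * W = W * diagm n \<theta>"
  proof (rule eq_matI)
    fix k j assume k: "k < dim_row (W * diagm n \<theta>)" and j: "j < dim_col (W * diagm n \<theta>)"
    hence k': "k < n" and j': "j < n" using W by auto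
    have "(N * W) $$ (k,j) = (N *\<^sub>v w j) $ k" using N' W k' j' colW[OF j'] by simp
    also have "\<dots> = \<theta> j * w j $ k" using wc[OF j'] k' by simp
    also have "\<dots> = (W * diagm n \<theta>) $$ (k,j)"
      using mult_diagm_right[OF W k' j'] k' j' unfolding W_def by simp
    finally show "(N * W) $$ (k,j) = (W * diagm n \<theta>) $$ (k,j)" .
  qed (use N' W in auto)
  have P: "prim_idem d N \<theta> i = W * dunit n i * Wi" if "i \<le> d" for i
  proof -
    have i: "i < n" using that n_def by simp
    have "prim_idem d N \<theta> i = prim_idem d N \<theta> i * (W * Wi)" using Wi E[of i] by simp
    also have "\<dots> = (prim_idem d N \<theta> i * W) * Wi" using E[of i] W Wi by (simp add: assoc_mult_mat)
    finally show ?thesis using EW[OF i] by simp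
  qed
  show ?thesis using W Wi NW P unfolding n_def by blast
qed

lemma sandwich_zero:
  fixes X :: "'a::field mat"
  assumes W: "W \<in> carrier_mat n n" and Wi: "Wi \<in> carrier_mat n n"
    and inv1: "W * Wi = 1\<^sub>m n" and inv2: "Wi * W = 1\<^sub>m n"
    and X: "X \<in> carrier_mat n n" and i: "i < n" and j: "j < n"
  shows "W * dunit n i * Wi * X * (W * dunit n j * Wi) = 0\<^sub>m n n \<longleftrightarrow> (Wi * X * W) $$ (i,j) = 0"
proof -
  define B where "B = Wi * X * W"
  have Bc: "B \<in> carrier_mat n n" unfolding B_def using W Wi X by simp
  define C where "C = dunit n i * B * dunit n j"
  have Cc: "C \<in> carrier_mat n n" unfolding C_def using Bc dunit_carrier[of n i] dunit_carrier[of n j] by (meson mult_carrier_mat)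
  have canc: "Wi * (W * Y) = Y" if "Y \<in> carrier_mat n m" for Y m
  proof -
    have "Wi * (W * Y) = (Wi * W) * Y" using W Wi that by (simp add: assoc_sq mult_sq)
    thus ?thesis using inv2 that by simp
  qed
  have eq: "W * dunit n i * Wi * X * (W * dunit n j * Wi) = W * C * Wi"
  proof -
    define Di where "Di = (dunit n i :: 'a mat)"
    define Dj where "Dj = (dunit n j :: 'a mat)"
    have Di: "Di \<in> carrier_mat n n" and Dj: "Dj \<in> carrier_mat n n" unfolding Di_def Dj_def by auto
    have "W * Di * Wi * X * (W * Dj * Wi) = W * (Di * (Wi * (X * (W * (Dj * Wi)))))"
      using W Wi X Di Dj by (simp add: assoc_sq mult_sq)
    moreover have "W * (Di * B * Dj) * Wi = W * (Di * (Wi * (X * (W * (Dj * Wi)))))"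
      unfolding B_def using W Wi X Di Dj by (simp add: assoc_sq mult_sq)
    ultimately show ?thesis unfolding C_def Di_def Dj_def by simp
  qed
  have Ce: "C $$ (k,l) = (if k = i \<and> l = j then B $$ (i,j) else 0)" if "k < n" "l < n" for k l
  proof -
    define DB where "DB = dunit n i * B"
    have DBc: "DB \<in> carrier_mat n n" unfolding DB_def using Bc by (simp add: mult_sq)
    have "C $$ (k,l) = (DB * dunit n j) $$ (k,l)" unfolding C_def DB_def ..
    also have "\<dots> = (if l = j then DB $$ (k,j) else 0)"
      using mult_dunit_right[OF DBc that j] .
    also have "\<dots> = (if k = i \<and> l = j then B $$ (i,j) else 0)"
      using mult_dunit_left[OF Bc that(1) j i] unfolding DB_def by (cases "k = i") simp_all
    finally show ?thesis .
  qed
  have bk: "Wi * (W * C * Wi) * W = C"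
  proof -
    have "Wi * (W * C * Wi) * W = Wi * (W * (C * (Wi * W)))" using W Wi Cc by (simp add: assoc_sq mult_sq)
    also have "\<dots> = C" using inv2 canc[of C n] Cc by simp
    finally show ?thesis .
  qed
  show ?thesis
  proof
    assume "W * dunit n i * Wi * X * (W * dunit n j * Wi) = 0\<^sub>m n n"
    hence "W * C * Wi = 0\<^sub>m n n" using eq by simp
    hence "C = Wi * 0\<^sub>m n n * W" using bk by simp
    also have "\<dots> = 0\<^sub>m n n" using W Wi by simp
    finally have "C $$ (i,j) = 0" using i j by simp
    thus "(Wi * X * W) $$ (i,j) = 0" using Ce[OF i j] unfolding B_def by simp
  next
    assume "(Wi * X * W) $$ (i,j) = 0"
    hence "C = 0\<^sub>m n n" using Ce Cc unfolding B_def by (intro eq_matI) auto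
    thus "W * dunit n i * Wi * X * (W * dunit n j * Wi) = 0\<^sub>m n n" using eq W Wi by simp
  qed
qed

lemma irred_iff:
  assumes B: "B \<in> carrier_mat (Suc d) (Suc d)"
  shows "irred_tridiagonal B \<longleftrightarrow> (\<forall>i\<le>d. \<forall>j\<le>d. ((i > j+1 \<or> j > i+1) \<longrightarrow> B $$ (i,j) = 0) \<and>
     ((i = j+1 \<or> j = i+1) \<longrightarrow> B $$ (i,j) \<noteq> 0))"
  using B unfolding irred_tridiagonal_def tridiagonal_def
  by (auto simp: less_Suc_eq_le)

lemma LS_iff:
  fixes A As :: "'a::field mat"
  assumes A: "A \<in> carrier_mat (Suc d) (Suc d)" and As: "As \<in> carrier_mat (Suc d) (Suc d)"
    and W: "W \<in> carrier_mat (Suc d) (Suc d)" and Wi: "Wi \<in> carrier_mat (Suc d) (Suc d)"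
    and W1: "W * Wi = 1\<^sub>m (Suc d)" and W2: "Wi * W = 1\<^sub>m (Suc d)"
    and E: "\<forall>i\<le>d. E i = W * dunit (Suc d) i * Wi"
    and Ws: "Ws \<in> carrier_mat (Suc d) (Suc d)" and Wsi: "Wsi \<in> carrier_mat (Suc d) (Suc d)"
    and Ws1: "Ws * Wsi = 1\<^sub>m (Suc d)" and Ws2: "Wsi * Ws = 1\<^sub>m (Suc d)"
    and Es: "\<forall>i\<le>d. Es i = Ws * dunit (Suc d) i * Wsi"
  shows "leonard_system d A As E Es \<longleftrightarrow> irred_tridiagonal (Wsi * A * Ws) \<and> irred_tridiagonal (Wi * As * W)"
proof -
  have z1: "Es i * A * Es j = 0\<^sub>m (Suc d) (Suc d) \<longleftrightarrow> (Wsi * A * Ws) $$ (i,j) = 0" if "i \<le> d" "j \<le> d" for i j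
    using sandwich_zero[OF Ws Wsi Ws1 Ws2 A, of i j] Es that by simp
  have z2: "E i * As * E j = 0\<^sub>m (Suc d) (Suc d) \<longleftrightarrow> (Wi * As * W) $$ (i,j) = 0" if "i \<le> d" "j \<le> d" for i j
    using sandwich_zero[OF W Wi W1 W2 As, of i j] E that by simp
  have c1: "Wsi * A * Ws \<in> carrier_mat (Suc d) (Suc d)" using Wsi A Ws by simp
  have c2: "Wi * As * W \<in> carrier_mat (Suc d) (Suc d)" using Wi As W by simp
  show ?thesis unfolding leonard_system_def irred_iff[OF c1] irred_iff[OF c2]
    using z1 z2 by blast
qed

lemma diag_conj:
  fixes N :: "'a::field mat"
  assumes N: "N \<in> carrier_mat n n" and W: "W \<in> carrier_mat n n" and Wi: "Wi \<in> carrier_mat n n"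
    and W2: "Wi * W = 1\<^sub>m n" and NW: "N * W = W * diagm n \<theta>"
  shows "Wi * N * W = diagm n \<theta>"
proof -
  have "Wi * N * W = Wi * (N * W)" using Wi N W by (simp add: assoc_sq)
  also have "\<dots> = Wi * (W * diagm n \<theta>)" using NW by simp
  also have "\<dots> = (Wi * W) * diagm n \<theta>" using Wi W by (simp add: assoc_sq)
  finally show ?thesis using W2 by simp
qed

lemma diagm_diagonal: "diagonal_mat (diagm n \<theta>)"
  unfolding diagonal_mat_def diagm_def by auto

lemma sum_single_atMost:
  fixes g :: "nat \<Rightarrow> 'a::comm_monoid_add"
  assumes "\<forall>l\<le>d. l \<noteq> s \<longrightarrow> g l = 0" and "s \<le> d"
  shows "(\<Sum>l\<le>d. g l) = g s"
proof -
  have "(\<Sum>l\<le>d. g l) = (\<Sum>l\<le>d. if l = s then g s else 0)"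
    using assms(1) by (intro sum.cong) auto
  also have "\<dots> = g s" using assms(2) by (simp add: sum.delta)
  finally show ?thesis .
qed

lemma chain_comb:
  fixes T :: "nat \<Rightarrow> nat \<Rightarrow> 'a::field" and y :: "nat \<Rightarrow> nat \<Rightarrow> 'a"
    and lam mu :: "nat \<Rightarrow> 'a" and \<sigma> :: "nat \<Rightarrow> nat"
  assumes trid: "\<forall>k\<le>d. \<forall>l\<le>d. (k > l+1 \<or> l > k+1) \<longrightarrow> T k l = 0"
    and irr: "\<forall>k<d. T (Suc k) k \<noteq> 0 \<and> T k (Suc k) \<noteq> 0"
    and linj: "inj_on lam {..d}"
    and sig: "\<forall>i\<le>d. \<sigma> i \<le> d \<and> lam (\<sigma> i) = mu i"
    and y0: "\<forall>k\<le>d. (lam k - mu 0) * y 0 k = 0" and y0nz: "\<exists>k\<le>d. y 0 k \<noteq> 0"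
    and yD: "\<forall>i. 1 \<le> i \<and> i \<le> d \<longrightarrow> (\<exists>b. \<forall>k\<le>d. (lam k - mu i) * y i k = b * y (i-1) k)"
    and yT: "\<forall>i<d. \<exists>c t. c \<noteq> 0 \<and> (\<forall>k\<le>d. y (Suc i) k = c * ((\<Sum>l\<le>d. T k l * y i l) - t * y i k))"
  shows "(\<forall>i\<le>d. \<sigma> i = i) \<or> (\<forall>i\<le>d. \<sigma> i = d - i)"
proof -
  have lneq: "lam k \<noteq> mu i" if "k \<le> d" "i \<le> d" "k \<noteq> \<sigma> i" for k i
  proof
    assume "lam k = mu i"
    hence "lam k = lam (\<sigma> i)" using sig that by simp
    thus False using inj_onD[OF linj] sig that by force
  qed
  have supp: "\<forall>k\<le>d. k \<notin> \<sigma> ` {..i} \<longrightarrow> y i k = 0" if "i \<le> d" for i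
    using that
  proof (induction i)
    case 0
    show ?case
    proof (intro allI impI)
      fix k assume k: "k \<le> d" "k \<notin> \<sigma> ` {..0}"
      hence "lam k \<noteq> mu 0" using lneq[of k 0] by auto
      thus "y 0 k = 0" using y0 k by auto
    qed
  next
    case (Suc i)
    obtain b where b: "\<forall>k\<le>d. (lam k - mu (Suc i)) * y (Suc i) k = b * y i k"
      using yD Suc.prems by fastforce
    show ?case
    proof (intro allI impI)
      fix k assume k: "k \<le> d" "k \<notin> \<sigma> ` {..Suc i}"
      hence "k \<notin> \<sigma> ` {..i}" "k \<noteq> \<sigma> (Suc i)" by auto
      hence "y i k = 0" using Suc k by auto
      hence "(lam k - mu (Suc i)) * y (Suc i) k = 0" using b k by simp
      moreover have "lam k \<noteq> mu (Suc i)" using lneq[of k "Suc i"] k Suc.prems \<open>k \<noteq> \<sigma> (Suc i)\<close> by auto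
      ultimately show "y (Suc i) k = 0" by simp
    qed
  qed
  define s where "s = \<sigma> 0"
  have s: "s \<le> d" using sig s_def by simp
  have y0s: "y 0 k = 0" if "k \<le> d" "k \<noteq> s" for k using supp[of 0] that s_def by auto
  have y0s': "y 0 s \<noteq> 0" using y0nz y0s by blast
  have s01: "s = 0 \<or> s = d"
  proof (rule ccontr)
    assume "\<not> ?thesis"
    hence s1: "0 < s" "s < d" using s by auto
    have d0: "0 < d" using s1 by simp
    obtain c t where ct: "c \<noteq> 0" "\<forall>k\<le>d. y 1 k = c * ((\<Sum>l\<le>d. T k l * y 0 l) - t * y 0 k)"
      using yT[rule_format, OF d0] by auto
    have val: "y 1 k = c * (T k s * y 0 s)" if "k \<le> d" "k \<noteq> s" for k
    proof -
      have "(\<Sum>l\<le>d. T k l * y 0 l) = T k s * y 0 s"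
        using y0s s by (intro sum_single_atMost) auto
      thus ?thesis using ct that y0s by simp
    qed
    have a: "y 1 (s-1) \<noteq> 0"
    proof -
      have k: "s - 1 < d" using s1 by simp
      have "T (s-1) (Suc (s-1)) \<noteq> 0" using irr k by blast
      moreover have "Suc (s-1) = s" using s1 by simp
      ultimately have "T (s-1) s \<noteq> 0" by simp
      thus ?thesis using val[of "s-1"] s1 ct y0s' by simp
    qed
    have b: "y 1 (s+1) \<noteq> 0"
    proof -
      have "T (s+1) s \<noteq> 0" using irr s1 by simp
      thus ?thesis using val[of "s+1"] s1 ct y0s' by simp
    qed
    have S1: "\<forall>k\<le>d. k \<notin> \<sigma> ` {..1} \<longrightarrow> y 1 k = 0" using supp[of 1] s1 by simp
    have "s - 1 \<in> \<sigma> ` {..1}"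
    proof (rule ccontr)
      assume "s - 1 \<notin> \<sigma> ` {..1}"
      hence "y 1 (s-1) = 0" using S1 s1 by simp
      thus False using a by simp
    qed
    moreover have "s + 1 \<in> \<sigma> ` {..1}"
    proof (rule ccontr)
      assume "s + 1 \<notin> \<sigma> ` {..1}"
      hence "y 1 (s+1) = 0" using S1 s1 by simp
      thus False using b by simp
    qed
    moreover have "{..1::nat} = {0,1}" by auto
    hence "\<sigma> ` {..1} = {s, \<sigma> 1}" using s_def by simp
    ultimately have "s - 1 = \<sigma> 1" "s + 1 = \<sigma> 1" using s1 by auto
    thus False using s1 by simp
  qed
  show ?thesis
  proof (cases "s = 0")
    case True
    have claim: "(\<forall>j\<le>i. \<sigma> j = j) \<and> (\<forall>k\<le>d. k > i \<longrightarrow> y i k = 0) \<and> y i i \<noteq> 0" if "i \<le> d" for i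
      using that
    proof (induction i)
      case 0
      then show ?case using True s_def y0s y0s' by auto
    next
      case (Suc i)
      have IH: "\<forall>j\<le>i. \<sigma> j = j" "\<forall>k\<le>d. k > i \<longrightarrow> y i k = 0" "y i i \<noteq> 0" using Suc by auto
      obtain c t where ct: "c \<noteq> 0" "\<forall>k\<le>d. y (Suc i) k = c * ((\<Sum>l\<le>d. T k l * y i l) - t * y i k)"
        using yT[rule_format, of i] Suc.prems by auto
      have z: "y (Suc i) k = 0" if "k \<le> d" "k > Suc i" for k
      proof -
        have "(\<Sum>l\<le>d. T k l * y i l) = 0"
        proof (intro sum.neutral ballI)
          fix l assume "l \<in> {..d}"
          show "T k l * y i l = 0"
          proof (cases "l \<le> i")
            case True thus ?thesis using trid that \<open>l \<in> {..d}\<close> by auto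
          next
            case False thus ?thesis using IH(2) \<open>l \<in> {..d}\<close> by auto
          qed
        qed
        thus ?thesis using ct that IH(2) by simp
      qed
      have nz: "y (Suc i) (Suc i) \<noteq> 0"
      proof -
        have "(\<Sum>l\<le>d. T (Suc i) l * y i l) = T (Suc i) i * y i i"
        proof (rule sum_single_atMost)
          show "\<forall>l\<le>d. l \<noteq> i \<longrightarrow> T (Suc i) l * y i l = 0"
          proof (intro allI impI)
            fix l assume l: "l \<le> d" "l \<noteq> i"
            show "T (Suc i) l * y i l = 0"
            proof (cases "l < i")
              case True thus ?thesis using trid l Suc.prems by auto
            next
              case False thus ?thesis using IH(2) l by auto
            qed
          qed
        qed (use Suc.prems in simp)
        moreover have "T (Suc i) i \<noteq> 0" using irr Suc.prems by simp
        ultimately show ?thesis using ct IH Suc.prems by simp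
      qed
      have "Suc i \<in> \<sigma> ` {..Suc i}" using supp[OF Suc.prems] nz Suc.prems by blast
      then obtain j where j: "j \<le> Suc i" "\<sigma> j = Suc i" by auto
      have "j = Suc i"
      proof (rule ccontr)
        assume "j \<noteq> Suc i"
        hence "j \<le> i" using j by simp
        thus False using IH(1) j by auto
      qed
      hence "\<forall>j\<le>Suc i. \<sigma> j = j" using IH(1) j le_Suc_eq by auto
      then show ?case using z nz by auto
    qed
    show ?thesis using claim by auto
  next
    case False
    hence sd: "s = d" using s01 by simp
    have claim: "(\<forall>j\<le>i. \<sigma> j = d - j) \<and> (\<forall>k. k < d - i \<longrightarrow> y i k = 0) \<and> y i (d - i) \<noteq> 0" if "i \<le> d" for i
      using that
    proof (induction i)
      case 0
      then show ?case using sd s_def y0s y0s' by auto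
    next
      case (Suc i)
      have IH: "\<forall>j\<le>i. \<sigma> j = d - j" "\<forall>k. k < d - i \<longrightarrow> y i k = 0" "y i (d - i) \<noteq> 0" using Suc by auto
      obtain c t where ct: "c \<noteq> 0" "\<forall>k\<le>d. y (Suc i) k = c * ((\<Sum>l\<le>d. T k l * y i l) - t * y i k)"
        using yT[rule_format, of i] Suc.prems by auto
      have z: "y (Suc i) k = 0" if "k < d - Suc i" for k
      proof -
        have "(\<Sum>l\<le>d. T k l * y i l) = 0"
        proof (intro sum.neutral ballI)
          fix l assume "l \<in> {..d}"
          show "T k l * y i l = 0"
          proof (cases "l < d - i")
            case True thus ?thesis using IH(2) by auto
          next
            case False thus ?thesis using trid that \<open>l \<in> {..d}\<close> by auto
          qed
        qed
        thus ?thesis using ct that IH(2) by simp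
      qed
      have nz: "y (Suc i) (d - Suc i) \<noteq> 0"
      proof -
        have "(\<Sum>l\<le>d. T (d - Suc i) l * y i l) = T (d - Suc i) (d - i) * y i (d - i)"
        proof (rule sum_single_atMost)
          show "\<forall>l\<le>d. l \<noteq> d - i \<longrightarrow> T (d - Suc i) l * y i l = 0"
          proof (intro allI impI)
            fix l assume l: "l \<le> d" "l \<noteq> d - i"
            show "T (d - Suc i) l * y i l = 0"
            proof (cases "l < d - i")
              case True thus ?thesis using IH(2) by auto
            next
              case False thus ?thesis using trid l Suc.prems by auto
            qed
          qed
        qed simp
        moreover have "T (d - Suc i) (d - i) \<noteq> 0"
        proof -
          have "d - Suc i < d" "Suc (d - Suc i) = d - i" using Suc.prems by auto
          thus ?thesis using irr by metis
        qed
        moreover have "y i (d - Suc i) = 0" using IH(2) Suc.prems by simp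
        ultimately show ?thesis using ct IH Suc.prems by simp
      qed
      have "d - Suc i \<in> \<sigma> ` {..Suc i}"
      proof (rule ccontr)
        assume "d - Suc i \<notin> \<sigma> ` {..Suc i}"
        hence "y (Suc i) (d - Suc i) = 0" using supp[OF Suc.prems] by simp
        thus False using nz by simp
      qed
      then obtain j where j: "j \<le> Suc i" "\<sigma> j = d - Suc i" by auto
      have "j = Suc i"
      proof (rule ccontr)
        assume "j \<noteq> Suc i"
        hence "j \<le> i" using j by simp
        thus False using IH(1) j Suc.prems by auto
      qed
      hence "\<forall>j\<le>Suc i. \<sigma> j = d - j" using IH(1) j le_Suc_eq by auto
      then show ?case using z nz by auto
    qed
    show ?thesis using claim by auto
  qed
qed

lemma diag_eq_diagm:
  assumes D: "D \<in> carrier_mat n n" and dg: "diagonal_mat D"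
  shows "D = diagm n (\<lambda>k. D $$ (k,k))"
  using D dg unfolding diagonal_mat_def diagm_def by (intro eq_matI) auto

lemma diagm_mult_vec:
  fixes f :: "nat \<Rightarrow> 'a::comm_ring_1"
  assumes v: "v \<in> carrier_vec n" and k: "k < n"
  shows "(diagm n f *\<^sub>v v) $ k = f k * v $ k"
  using v k by (simp add: diagm_def scalar_prod_def if_distrib[of "\<lambda>x. x * _"] sum.delta cong: if_cong)

lemma mat_vec_entry:
  fixes M :: "'a::comm_ring_1 mat"
  assumes M: "M \<in> carrier_mat (Suc d) (Suc d)" and v: "v \<in> carrier_vec (Suc d)" and k: "k \<le> d"
  shows "(M *\<^sub>v v) $ k = (\<Sum>l\<le>d. M $$ (k,l) * v $ l)"
  using M v k by (simp add: scalar_prod_def atLeast0LessThan lessThan_Suc_atMost)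

lemma mat_mat_entry:
  fixes M :: "'a::comm_ring_1 mat"
  assumes M: "M \<in> carrier_mat (Suc d) (Suc d)" and N: "N \<in> carrier_mat (Suc d) (Suc d)"
    and k: "k \<le> d" and j: "j \<le> d"
  shows "(M * N) $$ (k,j) = (\<Sum>l\<le>d. M $$ (k,l) * N $$ (l,j))"
  using M N k j by (simp add: scalar_prod_def atLeast0LessThan lessThan_Suc_atMost)

lemma conj_vec:
  fixes M :: "'a::field mat"
  assumes M: "M \<in> carrier_mat n n" and P: "P \<in> carrier_mat n n" and Q: "Q \<in> carrier_mat n n"
    and PQ: "P * Q = 1\<^sub>m n" and x: "x \<in> carrier_vec n"
  shows "Q *\<^sub>v (M *\<^sub>v x) = (Q * M * P) *\<^sub>v (Q *\<^sub>v x)"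
proof -
  have Qx: "Q *\<^sub>v x \<in> carrier_vec n" using Q x by simp
  have PQx: "P *\<^sub>v (Q *\<^sub>v x) \<in> carrier_vec n" using P Qx by simp
  have "(Q * M * P) *\<^sub>v (Q *\<^sub>v x) = (Q * M) *\<^sub>v (P *\<^sub>v (Q *\<^sub>v x))"
    using assoc_mult_mat_vec[of "Q * M" n n P n "Q *\<^sub>v x"] Q M P Qx by simp
  also have "\<dots> = Q *\<^sub>v (M *\<^sub>v (P *\<^sub>v (Q *\<^sub>v x)))"
    using assoc_mult_mat_vec[OF Q M PQx] .
  finally have "(Q * M * P) *\<^sub>v (Q *\<^sub>v x) = Q *\<^sub>v (M *\<^sub>v (P *\<^sub>v (Q *\<^sub>v x)))" .
  also have "P *\<^sub>v (Q *\<^sub>v x) = x"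
  proof -
    have "P *\<^sub>v (Q *\<^sub>v x) = (P * Q) *\<^sub>v x" using P Q x by simp
    thus ?thesis using PQ x by simp
  qed
  finally show ?thesis by simp
qed

lemma Q_smult_minus:
  fixes Q :: "'a::field mat"
  assumes Q: "Q \<in> carrier_mat n n" and u: "u \<in> carrier_vec n" and v: "v \<in> carrier_vec n"
  shows "Q *\<^sub>v (a \<cdot>\<^sub>v u - b \<cdot>\<^sub>v v) = a \<cdot>\<^sub>v (Q *\<^sub>v u) - b \<cdot>\<^sub>v (Q *\<^sub>v v)"
  using Q u v by (simp add: mult_minus_distrib_mat_vec mult_mat_vec)

lemma Q_smult:
  fixes Q :: "'a::field mat"
  assumes Q: "Q \<in> carrier_mat n n" and u: "u \<in> carrier_vec n"
  shows "Q *\<^sub>v (a \<cdot>\<^sub>v u) = a \<cdot>\<^sub>v (Q *\<^sub>v u)"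
  using Q u by (simp add: mult_mat_vec)

lemma LP_to_irred:
  fixes M N :: "'a::field mat" and \<theta>N mu :: "nat \<Rightarrow> 'a" and x :: "nat \<Rightarrow> 'a vec"
  assumes M: "M \<in> carrier_mat (Suc d) (Suc d)" and N: "N \<in> carrier_mat (Suc d) (Suc d)"
    and injN: "inj_on \<theta>N {..d}"
    and W: "W \<in> carrier_mat (Suc d) (Suc d)" and Wi: "Wi \<in> carrier_mat (Suc d) (Suc d)"
    and W1: "W * Wi = 1\<^sub>m (Suc d)" and W2: "Wi * W = 1\<^sub>m (Suc d)"
    and NW: "N * W = W * diagm (Suc d) \<theta>N"
    and P: "P \<in> carrier_mat (Suc d) (Suc d)" and Q: "Q \<in> carrier_mat (Suc d) (Suc d)"
    and PQ: "P * Q = 1\<^sub>m (Suc d)" and QP: "Q * P = 1\<^sub>m (Suc d)"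
    and irrT: "irred_tridiagonal (Q * M * P)" and dD: "diagonal_mat (Q * N * P)"
    and mu: "\<forall>i\<le>d. mu i = \<theta>N (if rf then d - i else i)"
    and xc: "\<forall>i\<le>d. x i \<in> carrier_vec (Suc d)" and x0: "x 0 \<noteq> 0\<^sub>v (Suc d)"
    and xN0: "N *\<^sub>v x 0 = mu 0 \<cdot>\<^sub>v x 0"
    and xD: "\<forall>i. 1 \<le> i \<and> i \<le> d \<longrightarrow> (\<exists>b. N *\<^sub>v x i - mu i \<cdot>\<^sub>v x i = b \<cdot>\<^sub>v x (i-1))"
    and xT: "\<forall>i<d. \<exists>c t. c \<noteq> 0 \<and> x (Suc i) = c \<cdot>\<^sub>v (M *\<^sub>v x i - t \<cdot>\<^sub>v x i)"
  shows "irred_tridiagonal (Wi * M * W)"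
proof -
  define T where "T = Q * M * P"
  define D where "D = Q * N * P"
  define lam where "lam k = D $$ (k,k)" for k
  define G where "G = Q * W"
  define Gi where "Gi = Wi * P"
  have Tc: "T \<in> carrier_mat (Suc d) (Suc d)" unfolding T_def using Q M P by simp
  have Dc: "D \<in> carrier_mat (Suc d) (Suc d)" unfolding D_def using Q N P by simp
  have Gc: "G \<in> carrier_mat (Suc d) (Suc d)" unfolding G_def using Q W by simp
  have Gic: "Gi \<in> carrier_mat (Suc d) (Suc d)" unfolding Gi_def using Wi P by simp
  have Dg: "diagm (Suc d) \<theta>N \<in> carrier_mat (Suc d) (Suc d)" by simp
  have GiG: "Gi * G = 1\<^sub>m (Suc d)"
  proof -
    have "Gi * G = Wi * ((P * Q) * W)" unfolding Gi_def G_def using Wi P Q W by (simp add: assoc_sq mult_sq)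
    thus ?thesis using PQ W W2 by simp
  qed
  have DG: "D * G = G * diagm (Suc d) \<theta>N"
  proof -
    have "D * G = Q * (N * ((P * Q) * W))" unfolding D_def G_def using Q N P W by (simp add: assoc_sq mult_sq)
    also have "\<dots> = Q * (W * diagm (Suc d) \<theta>N)" using PQ W NW by simp
    also have "\<dots> = G * diagm (Suc d) \<theta>N" unfolding G_def using Q W Dg by (simp add: assoc_sq mult_sq)
    finally show ?thesis .
  qed
  have WiN: "Wi * N = diagm (Suc d) \<theta>N * Wi"
  proof -
    have "Wi * N = Wi * N * (W * Wi)" using W1 Wi N by simp
    also have "\<dots> = Wi * (N * W) * Wi" using Wi N W by (simp add: assoc_sq mult_sq)
    also have "\<dots> = (Wi * W) * diagm (Suc d) \<theta>N * Wi" using NW Wi W Dg by (simp add: assoc_sq mult_sq)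
    finally show ?thesis using W2 Wi by simp
  qed
  have GiD: "Gi * D = diagm (Suc d) \<theta>N * Gi"
  proof -
    have "Gi * D = Wi * ((P * Q) * (N * P))" unfolding Gi_def D_def using Wi P Q N by (simp add: assoc_sq mult_sq)
    also have "\<dots> = (Wi * N) * P" using PQ N P Wi by (simp add: assoc_sq mult_sq)
    also have "\<dots> = diagm (Suc d) \<theta>N * Gi" unfolding Gi_def WiN using assoc_sq[OF Dg Wi P] .
    finally show ?thesis .
  qed
  have Dd: "D = diagm (Suc d) lam" unfolding lam_def using diag_eq_diagm[OF Dc] dD D_def by simp
  have eG: "lam k * G $$ (k,j) = G $$ (k,j) * \<theta>N j" if "k \<le> d" "j \<le> d" for k j
  proof -
    have "(D * G) $$ (k,j) = lam k * G $$ (k,j)" unfolding Dd using mult_diagm_left[OF Gc] that by simp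
    moreover have "(G * diagm (Suc d) \<theta>N) $$ (k,j) = G $$ (k,j) * \<theta>N j" using mult_diagm_right[OF Gc] that by simp
    ultimately show ?thesis using DG by auto
  qed
  have eGi: "Gi $$ (j,k) * lam k = \<theta>N j * Gi $$ (j,k)" if "k \<le> d" "j \<le> d" for k j
  proof -
    have "(Gi * D) $$ (j,k) = Gi $$ (j,k) * lam k" unfolding Dd using mult_diagm_right[OF Gic] that by simp
    moreover have "(diagm (Suc d) \<theta>N * Gi) $$ (j,k) = \<theta>N j * Gi $$ (j,k)" using mult_diagm_left[OF Gic] that by simp
    ultimately show ?thesis using GiD by auto
  qed
  have GiGe: "(\<Sum>l\<le>d. Gi $$ (j,l) * G $$ (l,j)) = 1" if "j \<le> d" for j
    using mat_mat_entry[OF Gic Gc that that] GiG that by simp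
  have exlam: "\<exists>k\<le>d. lam k = \<theta>N j" if j: "j \<le> d" for j
  proof (rule ccontr)
    assume "\<not> ?thesis"
    hence "G $$ (k,j) = 0" if "k \<le> d" for k using eG[OF that j] that by auto
    hence "(\<Sum>l\<le>d. Gi $$ (j,l) * G $$ (l,j)) = 0" by simp
    thus False using GiGe[OF j] by simp
  qed
  define \<sigma> where "\<sigma> j = (SOME k. k \<le> d \<and> lam k = \<theta>N j)" for j
  have sig: "\<sigma> j \<le> d \<and> lam (\<sigma> j) = \<theta>N j" if "j \<le> d" for j
    unfolding \<sigma>_def using someI_ex[OF exlam[OF that]] .
  have sinj: "inj_on \<sigma> {..d}"
  proof (rule inj_onI)
    fix a b assume "a \<in> {..d}" "b \<in> {..d}" "\<sigma> a = \<sigma> b"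
    hence "\<theta>N a = \<theta>N b" using sig by (metis atMost_iff)
    thus "a = b" using inj_onD[OF injN] \<open>a \<in> {..d}\<close> \<open>b \<in> {..d}\<close> by blast
  qed
  have ssurj: "\<sigma> ` {..d} = {..d}"
    using endo_inj_surj[of "{..d}" \<sigma>] sinj sig by auto
  have laminj: "inj_on lam {..d}"
  proof (rule inj_onI)
    fix a b assume a: "a \<in> {..d}" and b: "b \<in> {..d}" and ab: "lam a = lam b"
    obtain ja where ja: "ja \<le> d" "a = \<sigma> ja" using a ssurj by (metis atMost_iff imageE)
    obtain jb where jb: "jb \<le> d" "b = \<sigma> jb" using b ssurj by (metis atMost_iff imageE)
    have "\<theta>N ja = \<theta>N jb" using ab ja jb sig by metis
    hence "ja = jb" using inj_onD[OF injN] ja jb by blast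
    thus "a = b" using ja jb by simp
  qed
  have lamne: "lam k \<noteq> \<theta>N j" if "k \<le> d" "j \<le> d" "k \<noteq> \<sigma> j" for k j
  proof
    assume "lam k = \<theta>N j"
    hence "lam k = lam (\<sigma> j)" using sig that by simp
    thus False using inj_onD[OF laminj] sig that by force
  qed
  have G0: "G $$ (k,j) = 0" if "k \<le> d" "j \<le> d" "k \<noteq> \<sigma> j" for k j
  proof -
    have "(lam k - \<theta>N j) * G $$ (k,j) = 0" using eG[OF that(1,2)] by (simp add: algebra_simps)
    thus ?thesis using lamne[OF that] by simp
  qed
  have Gi0: "Gi $$ (j,k) = 0" if "k \<le> d" "j \<le> d" "k \<noteq> \<sigma> j" for k j
  proof -
    have "(lam k - \<theta>N j) * Gi $$ (j,k) = 0" using eGi[OF that(1,2)] by (simp add: algebra_simps)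
    thus ?thesis using lamne[OF that] by simp
  qed
  have nz: "Gi $$ (i, \<sigma> i) \<noteq> 0 \<and> G $$ (\<sigma> i, i) \<noteq> 0" if i: "i \<le> d" for i
  proof -
    have "(\<Sum>l\<le>d. Gi $$ (i,l) * G $$ (l,i)) = Gi $$ (i, \<sigma> i) * G $$ (\<sigma> i, i)"
      using G0 sig i by (intro sum_single_atMost) auto
    thus ?thesis using GiGe[OF i] by auto
  qed
  have Bexp: "Wi * M * W = Gi * T * G"
  proof -
    have "Gi * T * G = Wi * ((P * Q) * (M * ((P * Q) * W)))"
      unfolding Gi_def T_def G_def using Wi P Q M W by (simp add: assoc_sq mult_sq)
    also have "\<dots> = Wi * (M * W)" using PQ M W by simp
    finally show ?thesis using Wi M W by (simp add: assoc_sq)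
  qed
  have GiTe: "(Gi * T) $$ (i,l) = Gi $$ (i, \<sigma> i) * T $$ (\<sigma> i, l)" if "i \<le> d" "l \<le> d" for i l
  proof -
    have "(Gi * T) $$ (i,l) = (\<Sum>k\<le>d. Gi $$ (i,k) * T $$ (k,l))" using mat_mat_entry[OF Gic Tc that] .
    also have "\<dots> = Gi $$ (i, \<sigma> i) * T $$ (\<sigma> i, l)"
      using Gi0 sig that by (intro sum_single_atMost) auto
    finally show ?thesis .
  qed
  have GiTc: "Gi * T \<in> carrier_mat (Suc d) (Suc d)" using Gic Tc by simp
  have Bent: "(Wi * M * W) $$ (i,j) = Gi $$ (i, \<sigma> i) * T $$ (\<sigma> i, \<sigma> j) * G $$ (\<sigma> j, j)"
    if i: "i \<le> d" and j: "j \<le> d" for i j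
  proof -
    have "(Gi * T * G) $$ (i,j) = (\<Sum>l\<le>d. (Gi * T) $$ (i,l) * G $$ (l,j))" using mat_mat_entry[OF GiTc Gc i j] .
    also have "\<dots> = (Gi * T) $$ (i, \<sigma> j) * G $$ (\<sigma> j, j)"
      using G0 sig j by (intro sum_single_atMost) auto
    also have "\<dots> = Gi $$ (i, \<sigma> i) * T $$ (\<sigma> i, \<sigma> j) * G $$ (\<sigma> j, j)"
      using GiTe[OF i] sig j by simp
    finally show ?thesis using Bexp by simp
  qed
  have Bz: "(Wi * M * W) $$ (i,j) = 0 \<longleftrightarrow> T $$ (\<sigma> i, \<sigma> j) = 0" if "i \<le> d" "j \<le> d" for i j
    using Bent[OF that] nz[OF that(1)] nz[OF that(2)] by simp
  define y where "y i k = (Q *\<^sub>v x i) $ k" for i k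
  have Qxc: "Q *\<^sub>v x i \<in> carrier_vec (Suc d)" for i by (intro carrier_vecI) (use Q in simp)
  have Dy: "(Q *\<^sub>v (N *\<^sub>v x i)) $ k = lam k * y i k" if "i \<le> d" "k \<le> d" for i k
  proof -
    have "Q *\<^sub>v (N *\<^sub>v x i) = D *\<^sub>v (Q *\<^sub>v x i)" unfolding D_def using conj_vec[OF N P Q PQ] xc that by simp
    thus ?thesis unfolding Dd y_def using diagm_mult_vec[OF Qxc, of k lam] that by simp
  qed
  have Ty: "(Q *\<^sub>v (M *\<^sub>v x i)) $ k = (\<Sum>l\<le>d. T $$ (k,l) * y i l)" if "i \<le> d" "k \<le> d" for i k
  proof -
    have "Q *\<^sub>v (M *\<^sub>v x i) = T *\<^sub>v (Q *\<^sub>v x i)" unfolding T_def using conj_vec[OF M P Q PQ] xc that by simp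
    thus ?thesis unfolding y_def using mat_vec_entry[OF Tc Qxc that(2)] by simp
  qed
  have Qsm: "(Q *\<^sub>v (a \<cdot>\<^sub>v x i)) $ k = a * y i k" if "i \<le> d" "k \<le> d" for a i k
    using Q_smult[OF Q, of "x i" a] xc that Q unfolding y_def by simp
  have y0: "\<forall>k\<le>d. (lam k - mu 0) * y 0 k = 0"
  proof (intro allI impI)
    fix k assume k: "k \<le> d"
    have "(Q *\<^sub>v (N *\<^sub>v x 0)) $ k = (Q *\<^sub>v (mu 0 \<cdot>\<^sub>v x 0)) $ k" using xN0 by simp
    thus "(lam k - mu 0) * y 0 k = 0" using Dy[of 0 k] Qsm[of 0 k] k by (simp add: algebra_simps)
  qed
  have y0nz: "\<exists>k\<le>d. y 0 k \<noteq> 0"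
  proof -
    have "Q *\<^sub>v x 0 \<noteq> 0\<^sub>v (Suc d)"
    proof
      assume "Q *\<^sub>v x 0 = 0\<^sub>v (Suc d)"
      hence "P *\<^sub>v (Q *\<^sub>v x 0) = 0\<^sub>v (Suc d)" using P by auto
      moreover have "P *\<^sub>v (Q *\<^sub>v x 0) = x 0" using P Q xc PQ
        by (metis assoc_mult_mat_vec le0 one_mult_mat_vec)
      ultimately show False using x0 by simp
    qed
    then obtain k where "k < Suc d" "y 0 k \<noteq> 0" using vec_nonzero_entry[OF Qxc] unfolding y_def by blast
    thus ?thesis using less_Suc_eq_le by blast
  qed
  have yD: "\<forall>i. 1 \<le> i \<and> i \<le> d \<longrightarrow> (\<exists>b. \<forall>k\<le>d. (lam k - mu i) * y i k = b * y (i-1) k)"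
  proof (intro allI impI)
    fix i assume i: "1 \<le> i \<and> i \<le> d"
    then obtain b where b: "N *\<^sub>v x i - mu i \<cdot>\<^sub>v x i = b \<cdot>\<^sub>v x (i-1)" using xD by blast
    have xi: "x i \<in> carrier_vec (Suc d)" "x (i-1) \<in> carrier_vec (Suc d)" using xc i by auto
    show "\<exists>b. \<forall>k\<le>d. (lam k - mu i) * y i k = b * y (i-1) k"
    proof (intro exI allI impI)
      fix k assume k: "k \<le> d"
      have "Q *\<^sub>v (N *\<^sub>v x i - mu i \<cdot>\<^sub>v x i) = Q *\<^sub>v (N *\<^sub>v x i) - Q *\<^sub>v (mu i \<cdot>\<^sub>v x i)"
        using mult_minus_distrib_mat_vec[OF Q] xi N by simp
      hence "(Q *\<^sub>v (N *\<^sub>v x i)) $ k - (Q *\<^sub>v (mu i \<cdot>\<^sub>v x i)) $ k = (Q *\<^sub>v (b \<cdot>\<^sub>v x (i-1))) $ k"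
        using b k Q by simp
      moreover have "(Q *\<^sub>v (b \<cdot>\<^sub>v x (i-1))) $ k = b * y (i-1) k" by (rule Qsm) (use i k in auto)
      moreover have "(Q *\<^sub>v (mu i \<cdot>\<^sub>v x i)) $ k = mu i * y i k" by (rule Qsm) (use i k in auto)
      moreover have "(Q *\<^sub>v (N *\<^sub>v x i)) $ k = lam k * y i k" by (rule Dy) (use i k in auto)
      ultimately show "(lam k - mu i) * y i k = b * y (i-1) k" by (simp add: algebra_simps)
    qed
  qed
  have yT: "\<forall>i<d. \<exists>c t. c \<noteq> 0 \<and> (\<forall>k\<le>d. y (Suc i) k = c * ((\<Sum>l\<le>d. T $$ (k,l) * y i l) - t * y i k))"
  proof (intro allI impI)
    fix i assume i: "i < d"
    then obtain c t where ct: "c \<noteq> 0" "x (Suc i) = c \<cdot>\<^sub>v (M *\<^sub>v x i - t \<cdot>\<^sub>v x i)" using xT by blast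
    have xi: "x i \<in> carrier_vec (Suc d)" using xc i by auto
    show "\<exists>c t. c \<noteq> 0 \<and> (\<forall>k\<le>d. y (Suc i) k = c * ((\<Sum>l\<le>d. T $$ (k,l) * y i l) - t * y i k))"
    proof (intro exI conjI allI impI)
      fix k assume k: "k \<le> d"
      have Mx: "M *\<^sub>v x i - t \<cdot>\<^sub>v x i \<in> carrier_vec (Suc d)" using M xi by simp
      have "Q *\<^sub>v x (Suc i) = c \<cdot>\<^sub>v (Q *\<^sub>v (M *\<^sub>v x i - t \<cdot>\<^sub>v x i))" using ct Q_smult[OF Q Mx] by simp
      also have "Q *\<^sub>v (M *\<^sub>v x i - t \<cdot>\<^sub>v x i) = Q *\<^sub>v (M *\<^sub>v x i) - Q *\<^sub>v (t \<cdot>\<^sub>v x i)"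
        using mult_minus_distrib_mat_vec[OF Q] xi M by simp
      finally have "y (Suc i) k = c * ((Q *\<^sub>v (M *\<^sub>v x i)) $ k - (Q *\<^sub>v (t \<cdot>\<^sub>v x i)) $ k)"
        unfolding y_def using k Q by simp
      thus "y (Suc i) k = c * ((\<Sum>l\<le>d. T $$ (k,l) * y i l) - t * y i k)"
        using Ty[of i k] Qsm[of i k t] i k by simp
    qed (use ct in simp)
  qed
  have Tirr: "\<forall>k\<le>d. \<forall>l\<le>d. ((k > l+1 \<or> l > k+1) \<longrightarrow> T $$ (k,l) = 0) \<and> ((k = l+1 \<or> l = k+1) \<longrightarrow> T $$ (k,l) \<noteq> 0)"
    using irrT irred_iff[OF Tc] unfolding T_def by simp
  define \<sigma>' where "\<sigma>' i = \<sigma> (if rf then d - i else i)" for i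
  have comb: "(\<forall>i\<le>d. \<sigma>' i = i) \<or> (\<forall>i\<le>d. \<sigma>' i = d - i)"
  proof (rule chain_comb[where T="\<lambda>k l. T $$ (k,l)" and y=y and lam=lam and mu=mu])
    show "\<forall>k\<le>d. \<forall>l\<le>d. (k > l+1 \<or> l > k+1) \<longrightarrow> T $$ (k,l) = 0" using Tirr by blast
    show "\<forall>k<d. T $$ (Suc k, k) \<noteq> 0 \<and> T $$ (k, Suc k) \<noteq> 0"
    proof (intro allI impI conjI)
      fix k assume k: "k < d"
      show "T $$ (Suc k, k) \<noteq> 0" using Tirr[rule_format, of "Suc k" k] k by simp
      show "T $$ (k, Suc k) \<noteq> 0" using Tirr[rule_format, of k "Suc k"] k by simp
    qed
    show "\<forall>i\<le>d. \<sigma>' i \<le> d \<and> lam (\<sigma>' i) = mu i" using sig mu unfolding \<sigma>'_def by auto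
  qed (use laminj y0 y0nz yD yT in auto)
  have sid: "(\<forall>i\<le>d. \<sigma> i = i) \<or> (\<forall>i\<le>d. \<sigma> i = d - i)"
  proof (cases rf)
    case True
    have e: "\<sigma> i = \<sigma>' (d - i)" if "i \<le> d" for i unfolding \<sigma>'_def using True that by simp
    show ?thesis using comb
    proof
      assume "\<forall>i\<le>d. \<sigma>' i = i" thus ?thesis using e by auto
    next
      assume "\<forall>i\<le>d. \<sigma>' i = d - i" thus ?thesis using e by auto
    qed
  next
    case False
    thus ?thesis using comb unfolding \<sigma>'_def by simp
  qed
  have Bc: "Wi * M * W \<in> carrier_mat (Suc d) (Suc d)" using Wi M W by simp
  show ?thesis unfolding irred_iff[OF Bc]
  proof (intro allI impI)
    fix i j assume i: "i \<le> d" and j: "j \<le> d"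
    show "((i > j+1 \<or> j > i+1) \<longrightarrow> (Wi * M * W) $$ (i,j) = 0) \<and> ((i = j+1 \<or> j = i+1) \<longrightarrow> (Wi * M * W) $$ (i,j) \<noteq> 0)"
      using sid
    proof
      assume "\<forall>i\<le>d. \<sigma> i = i"
      thus ?thesis using Bz[OF i j] Tirr i j by auto
    next
      assume s: "\<forall>i\<le>d. \<sigma> i = d - i"
      have "((d - i > d - j + 1 \<or> d - j > d - i + 1) \<longrightarrow> T $$ (d - i, d - j) = 0) \<and>
            ((d - i = d - j + 1 \<or> d - j = d - i + 1) \<longrightarrow> T $$ (d - i, d - j) \<noteq> 0)"
        using Tirr[rule_format, of "d - i" "d - j"] by simp
      moreover have "(d - i > d - j + 1 \<or> d - j > d - i + 1) \<longleftrightarrow> (i > j+1 \<or> j > i+1)" using i j by arith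
      moreover have "(d - i = d - j + 1 \<or> d - j = d - i + 1) \<longleftrightarrow> (i = j+1 \<or> j = i+1)" using i j by arith
      ultimately show ?thesis using Bz[OF i j] s i j by auto
    qed
  qed
qed

lemma shift_entry:
  fixes A :: "'a::field mat"
  assumes A: "A \<in> carrier_mat n n" and w: "w \<in> carrier_vec n" and k: "k < n"
  shows "((A - t \<cdot>\<^sub>m 1\<^sub>m n) *\<^sub>v w) $ k = (A *\<^sub>v w) $ k - t * w $ k"
proof -
  have r: "row (A - t \<cdot>\<^sub>m 1\<^sub>m n) k = row A k - t \<cdot>\<^sub>v unit_vec n k"
    using A k by (auto intro!: eq_vecI)
  have r1: "row A k \<in> carrier_vec n" using A by auto
  have r2: "t \<cdot>\<^sub>v unit_vec n k \<in> carrier_vec n" by auto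
  have "((A - t \<cdot>\<^sub>m 1\<^sub>m n) *\<^sub>v w) $ k = (row A k - t \<cdot>\<^sub>v unit_vec n k) \<bullet> w"
    using A k r by simp
  also have "\<dots> = row A k \<bullet> w - t * w $ k"
    using minus_scalar_prod_distrib[OF r1 r2 w] w k by simp
  finally show ?thesis using A k by simp
qed

lemma shift_apply:
  fixes A :: "'a::field mat"
  assumes A: "A \<in> carrier_mat n n" and u: "u \<in> carrier_vec n"
  shows "(A - t \<cdot>\<^sub>m 1\<^sub>m n) *\<^sub>v (c \<cdot>\<^sub>v u) = c \<cdot>\<^sub>v (A *\<^sub>v u - t \<cdot>\<^sub>v u)"
proof (rule eq_vecI)
  fix k assume "k < dim_vec (c \<cdot>\<^sub>v (A *\<^sub>v u - t \<cdot>\<^sub>v u))"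
  hence k: "k < n" using A u by simp
  have cu: "c \<cdot>\<^sub>v u \<in> carrier_vec n" using u by simp
  have "((A - t \<cdot>\<^sub>m 1\<^sub>m n) *\<^sub>v (c \<cdot>\<^sub>v u)) $ k = (A *\<^sub>v (c \<cdot>\<^sub>v u)) $ k - t * (c \<cdot>\<^sub>v u) $ k"
    using shift_entry[OF A cu k] .
  also have "A *\<^sub>v (c \<cdot>\<^sub>v u) = c \<cdot>\<^sub>v (A *\<^sub>v u)" using mult_mat_vec[OF A u] .
  finally show "((A - t \<cdot>\<^sub>m 1\<^sub>m n) *\<^sub>v (c \<cdot>\<^sub>v u)) $ k = (c \<cdot>\<^sub>v (A *\<^sub>v u - t \<cdot>\<^sub>v u)) $ k"
    using A u k by (simp add: algebra_simps)
qed (use A u in simp)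

lemma zero_smult_vec':
  assumes "v \<in> carrier_vec n" shows "(0::'a::field) \<cdot>\<^sub>v v = 0\<^sub>v n"
  using assms by (intro eq_vecI) auto

lemma split_chain:
  fixes A As :: "'a::field mat"
  assumes A: "A \<in> carrier_mat (Suc d) (Suc d)" and As: "As \<in> carrier_mat (Suc d) (Suc d)"
    and sp: "split_decomposition d A As \<theta> \<theta>s U"
  shows "\<exists>u. (\<forall>i\<le>d. u i \<in> carrier_vec (Suc d) \<and> u i \<noteq> 0\<^sub>v (Suc d)) \<and>
     (\<forall>i<d. \<exists>c. c \<noteq> 0 \<and> u (Suc i) = c \<cdot>\<^sub>v (A *\<^sub>v u i - \<theta> i \<cdot>\<^sub>v u i)) \<and>
     (\<forall>i<d. \<exists>b. A *\<^sub>v u i - \<theta> i \<cdot>\<^sub>v u i = b \<cdot>\<^sub>v u (Suc i)) \<and>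
     A *\<^sub>v u d = \<theta> d \<cdot>\<^sub>v u d \<and>
     (\<forall>i. 1 \<le> i \<and> i \<le> d \<longrightarrow> (\<exists>c. c \<noteq> 0 \<and> u (i-1) = c \<cdot>\<^sub>v (As *\<^sub>v u i - \<theta>s i \<cdot>\<^sub>v u i))) \<and>
     (\<forall>i. 1 \<le> i \<and> i \<le> d \<longrightarrow> (\<exists>b. As *\<^sub>v u i - \<theta>s i \<cdot>\<^sub>v u i = b \<cdot>\<^sub>v u (i-1))) \<and>
     As *\<^sub>v u 0 = \<theta>s 0 \<cdot>\<^sub>v u 0"
proof -
  have "\<forall>i\<in>{..d}. \<exists>u. u \<in> carrier_vec (Suc d) \<and> u \<noteq> 0\<^sub>v (Suc d) \<and> U i = {c \<cdot>\<^sub>v u | c. True}"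
    using sp unfolding split_decomposition_def is_decomposition_def by auto
  then obtain u where u: "\<forall>i\<in>{..d}. u i \<in> carrier_vec (Suc d) \<and> u i \<noteq> 0\<^sub>v (Suc d) \<and> U i = {c \<cdot>\<^sub>v u i | c. True}"
    by metis
  have uc: "u i \<in> carrier_vec (Suc d)" "u i \<noteq> 0\<^sub>v (Suc d)" "U i = {c \<cdot>\<^sub>v u i | c. True}" if "i \<le> d" for i
    using u that by auto
  have inU: "u i \<in> U i" if "i \<le> d" for i
    using uc[OF that] by (auto intro!: exI[of _ 1])
  have imA: "(\<lambda>v. (A - \<theta> i \<cdot>\<^sub>m 1\<^sub>m (Suc d)) *\<^sub>v v) ` U i = U (Suc i)" if "i < d" for i
    using sp that unfolding split_decomposition_def by auto
  have imAs: "(\<lambda>v. (As - \<theta>s i \<cdot>\<^sub>m 1\<^sub>m (Suc d)) *\<^sub>v v) ` U i = U (i - 1)" if "1 \<le> i" "i \<le> d" for i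
    using sp that unfolding split_decomposition_def by auto
  have fwdA: "\<exists>c. c \<noteq> 0 \<and> u (Suc i) = c \<cdot>\<^sub>v (A *\<^sub>v u i - \<theta> i \<cdot>\<^sub>v u i)" if i: "i < d" for i
  proof -
    have "u (Suc i) \<in> (\<lambda>v. (A - \<theta> i \<cdot>\<^sub>m 1\<^sub>m (Suc d)) *\<^sub>v v) ` U i" using imA[OF i] inU i by simp
    then obtain c where c: "u (Suc i) = (A - \<theta> i \<cdot>\<^sub>m 1\<^sub>m (Suc d)) *\<^sub>v (c \<cdot>\<^sub>v u i)"
      using uc i by auto
    hence c': "u (Suc i) = c \<cdot>\<^sub>v (A *\<^sub>v u i - \<theta> i \<cdot>\<^sub>v u i)" using shift_apply[OF A] uc i by simp
    have "c \<noteq> 0"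
    proof
      assume "c = 0"
      moreover have "A *\<^sub>v u i - \<theta> i \<cdot>\<^sub>v u i \<in> carrier_vec (Suc d)" using A uc i by simp
      ultimately have "u (Suc i) = 0\<^sub>v (Suc d)" using c' zero_smult_vec' by metis
      thus False using uc[of "Suc i"] i by simp
    qed
    thus ?thesis using c' by blast
  qed
  have bwdA: "\<exists>b. A *\<^sub>v u i - \<theta> i \<cdot>\<^sub>v u i = b \<cdot>\<^sub>v u (Suc i)" if i: "i < d" for i
  proof -
    obtain c where c: "c \<noteq> 0" "u (Suc i) = c \<cdot>\<^sub>v (A *\<^sub>v u i - \<theta> i \<cdot>\<^sub>v u i)" using fwdA[OF i] by blast
    have v: "A *\<^sub>v u i - \<theta> i \<cdot>\<^sub>v u i \<in> carrier_vec (Suc d)" using A uc i by simp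
    have "(1 / c) \<cdot>\<^sub>v u (Suc i) = ((1/c) * c) \<cdot>\<^sub>v (A *\<^sub>v u i - \<theta> i \<cdot>\<^sub>v u i)"
      using c(2) by (simp add: smult_smult_assoc)
    also have "\<dots> = A *\<^sub>v u i - \<theta> i \<cdot>\<^sub>v u i" using c(1) by simp
    finally show ?thesis by metis
  qed
  have fwdAs: "\<exists>c. c \<noteq> 0 \<and> u (i-1) = c \<cdot>\<^sub>v (As *\<^sub>v u i - \<theta>s i \<cdot>\<^sub>v u i)" if i: "1 \<le> i" "i \<le> d" for i
  proof -
    have "u (i-1) \<in> (\<lambda>v. (As - \<theta>s i \<cdot>\<^sub>m 1\<^sub>m (Suc d)) *\<^sub>v v) ` U i" using imAs[OF i] inU i by simp
    then obtain c where c: "u (i-1) = (As - \<theta>s i \<cdot>\<^sub>m 1\<^sub>m (Suc d)) *\<^sub>v (c \<cdot>\<^sub>v u i)"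
      using uc i by auto
    hence c': "u (i-1) = c \<cdot>\<^sub>v (As *\<^sub>v u i - \<theta>s i \<cdot>\<^sub>v u i)" using shift_apply[OF As] uc i by simp
    have "c \<noteq> 0"
    proof
      assume "c = 0"
      moreover have "As *\<^sub>v u i - \<theta>s i \<cdot>\<^sub>v u i \<in> carrier_vec (Suc d)" using As uc i by simp
      ultimately have "u (i-1) = 0\<^sub>v (Suc d)" using c' zero_smult_vec' by metis
      moreover have "i - 1 \<le> d" using i by simp
      ultimately show False using uc(2)[of "i-1"] by simp
    qed
    thus ?thesis using c' by blast
  qed
  have bwdAs: "\<exists>b. As *\<^sub>v u i - \<theta>s i \<cdot>\<^sub>v u i = b \<cdot>\<^sub>v u (i-1)" if i: "1 \<le> i" "i \<le> d" for i
  proof -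
    have "(As - \<theta>s i \<cdot>\<^sub>m 1\<^sub>m (Suc d)) *\<^sub>v u i \<in> U (i-1)" using imAs[OF i] inU[of i] i by blast
    then obtain b where "(As - \<theta>s i \<cdot>\<^sub>m 1\<^sub>m (Suc d)) *\<^sub>v (1 \<cdot>\<^sub>v u i) = b \<cdot>\<^sub>v u (i-1)" using uc[of "i-1"] i by auto
    hence "As *\<^sub>v u i - \<theta>s i \<cdot>\<^sub>v u i = b \<cdot>\<^sub>v u (i-1)" using shift_apply[OF As, of "u i" "\<theta>s i" 1] uc i by auto
    thus ?thesis by blast
  qed
  have eigA: "A *\<^sub>v u d = \<theta> d \<cdot>\<^sub>v u d"
  proof -
    have "(A - \<theta> d \<cdot>\<^sub>m 1\<^sub>m (Suc d)) *\<^sub>v u d \<in> {0\<^sub>v (Suc d)}"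
      using sp inU[of d] unfolding split_decomposition_def by blast
    hence z: "(A - \<theta> d \<cdot>\<^sub>m 1\<^sub>m (Suc d)) *\<^sub>v u d = 0\<^sub>v (Suc d)" by simp
    show ?thesis
    proof (rule eq_vecI)
      fix k assume "k < dim_vec (\<theta> d \<cdot>\<^sub>v u d)"
      hence k: "k < Suc d" using uc[of d] by simp
      have "((A - \<theta> d \<cdot>\<^sub>m 1\<^sub>m (Suc d)) *\<^sub>v u d) $ k = 0" using z k by simp
      thus "(A *\<^sub>v u d) $ k = (\<theta> d \<cdot>\<^sub>v u d) $ k" using shift_entry[OF A _ k, of "u d"] uc[of d] k by simp
    qed (use A uc[of d] in simp)
  qed
  have eigAs: "As *\<^sub>v u 0 = \<theta>s 0 \<cdot>\<^sub>v u 0"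
  proof -
    have "(As - \<theta>s 0 \<cdot>\<^sub>m 1\<^sub>m (Suc d)) *\<^sub>v u 0 \<in> {0\<^sub>v (Suc d)}"
      using sp inU[of 0] unfolding split_decomposition_def by blast
    hence z: "(As - \<theta>s 0 \<cdot>\<^sub>m 1\<^sub>m (Suc d)) *\<^sub>v u 0 = 0\<^sub>v (Suc d)" by simp
    show ?thesis
    proof (rule eq_vecI)
      fix k assume "k < dim_vec (\<theta>s 0 \<cdot>\<^sub>v u 0)"
      hence k: "k < Suc d" using uc[of 0] by simp
      have "((As - \<theta>s 0 \<cdot>\<^sub>m 1\<^sub>m (Suc d)) *\<^sub>v u 0) $ k = 0" using z k by simp
      thus "(As *\<^sub>v u 0) $ k = (\<theta>s 0 \<cdot>\<^sub>v u 0) $ k" using shift_entry[OF As _ k, of "u 0"] uc[of 0] k by simp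
    qed (use As uc[of 0] in simp)
  qed
  show ?thesis
    apply (rule exI[of _ u])
    using uc fwdA bwdA eigA fwdAs bwdAs eigAs by auto
qed

theorem lemma5p9:
  fixes d :: nat and A As :: "'a::field mat"
    and \<theta> \<theta>s :: "nat \<Rightarrow> 'a" and E Es :: "nat \<Rightarrow> 'a mat"
  assumes "A \<in> carrier_mat (Suc d) (Suc d)" and "As \<in> carrier_mat (Suc d) (Suc d)"
    and "mult_free d A" and "mult_free d As"
    and "inj_on \<theta> {..d}" and "\<forall>i\<le>d. eigenvalue A (\<theta> i)"
    and "inj_on \<theta>s {..d}" and "\<forall>i\<le>d. eigenvalue As (\<theta>s i)"
    and "\<forall>i\<le>d. E i = prim_idem d A \<theta> i"
    and "\<forall>i\<le>d. Es i = prim_idem d As \<theta>s i"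
    and "\<exists>U. split_decomposition d A As \<theta> \<theta>s U"
  shows "leonard_pair d A As \<longleftrightarrow> leonard_system d A As E Es"
proof -
  note A = assms(1) and As = assms(2) and inj = assms(5) and injs = assms(7)
  obtain W Wi where W: "W \<in> carrier_mat (Suc d) (Suc d)" and Wi: "Wi \<in> carrier_mat (Suc d) (Suc d)"
    and W1: "W * Wi = 1\<^sub>m (Suc d)" and W2: "Wi * W = 1\<^sub>m (Suc d)" and AW: "A * W = W * diagm (Suc d) \<theta>"
    and WE: "\<forall>i\<le>d. prim_idem d A \<theta> i = W * dunit (Suc d) i * Wi"
    using diagonalize[OF A inj assms(6)] by blast
  obtain Ws Wsi where Ws: "Ws \<in> carrier_mat (Suc d) (Suc d)" and Wsi: "Wsi \<in> carrier_mat (Suc d) (Suc d)"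
    and Ws1: "Ws * Wsi = 1\<^sub>m (Suc d)" and Ws2: "Wsi * Ws = 1\<^sub>m (Suc d)" and AsWs: "As * Ws = Ws * diagm (Suc d) \<theta>s"
    and WsE: "\<forall>i\<le>d. prim_idem d As \<theta>s i = Ws * dunit (Suc d) i * Wsi"
    using diagonalize[OF As injs assms(8)] by blast
  have E: "\<forall>i\<le>d. E i = W * dunit (Suc d) i * Wi" using assms(9) WE by simp
  have Es: "\<forall>i\<le>d. Es i = Ws * dunit (Suc d) i * Wsi" using assms(10) WsE by simp
  have LSiff: "leonard_system d A As E Es \<longleftrightarrow> irred_tridiagonal (Wsi * A * Ws) \<and> irred_tridiagonal (Wi * As * W)"
    by (rule LS_iff[OF A As W Wi W1 W2 E Ws Wsi Ws1 Ws2 Es])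
  obtain U where sp: "split_decomposition d A As \<theta> \<theta>s U" using assms(11) by blast
  obtain u where uc: "\<forall>i\<le>d. u i \<in> carrier_vec (Suc d) \<and> u i \<noteq> 0\<^sub>v (Suc d)"
    and fwdA: "\<forall>i<d. \<exists>c. c \<noteq> 0 \<and> u (Suc i) = c \<cdot>\<^sub>v (A *\<^sub>v u i - \<theta> i \<cdot>\<^sub>v u i)"
    and bwdA: "\<forall>i<d. \<exists>b. A *\<^sub>v u i - \<theta> i \<cdot>\<^sub>v u i = b \<cdot>\<^sub>v u (Suc i)"
    and eigA: "A *\<^sub>v u d = \<theta> d \<cdot>\<^sub>v u d"
    and fwdAs: "\<forall>i. 1 \<le> i \<and> i \<le> d \<longrightarrow> (\<exists>c. c \<noteq> 0 \<and> u (i-1) = c \<cdot>\<^sub>v (As *\<^sub>v u i - \<theta>s i \<cdot>\<^sub>v u i))"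
    and bwdAs: "\<forall>i. 1 \<le> i \<and> i \<le> d \<longrightarrow> (\<exists>b. As *\<^sub>v u i - \<theta>s i \<cdot>\<^sub>v u i = b \<cdot>\<^sub>v u (i-1))"
    and eigAs: "As *\<^sub>v u 0 = \<theta>s 0 \<cdot>\<^sub>v u 0"
    using split_chain[OF A As sp] by blast
  show ?thesis
  proof
    assume LP: "leonard_pair d A As"
    obtain P1 Q1 where P1: "P1 \<in> carrier_mat (Suc d) (Suc d)" and Q1: "Q1 \<in> carrier_mat (Suc d) (Suc d)"
      and PQ1: "P1 * Q1 = 1\<^sub>m (Suc d)" and QP1: "Q1 * P1 = 1\<^sub>m (Suc d)"
      and T1: "irred_tridiagonal (Q1 * A * P1)" and D1: "diagonal_mat (Q1 * As * P1)"
      using LP unfolding leonard_pair_def by blast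
    obtain P2 Q2 where P2: "P2 \<in> carrier_mat (Suc d) (Suc d)" and Q2: "Q2 \<in> carrier_mat (Suc d) (Suc d)"
      and PQ2: "P2 * Q2 = 1\<^sub>m (Suc d)" and QP2: "Q2 * P2 = 1\<^sub>m (Suc d)"
      and T2: "irred_tridiagonal (Q2 * As * P2)" and D2: "diagonal_mat (Q2 * A * P2)"
      using LP unfolding leonard_pair_def by blast
    have i1: "irred_tridiagonal (Wsi * A * Ws)"
    proof (rule LP_to_irred[OF A As injs Ws Wsi Ws1 Ws2 AsWs P1 Q1 PQ1 QP1 T1 D1,
          where mu = \<theta>s and rf = False and x = u])
      show "\<forall>i<d. \<exists>c t. c \<noteq> 0 \<and> u (Suc i) = c \<cdot>\<^sub>v (A *\<^sub>v u i - t \<cdot>\<^sub>v u i)" using fwdA by blast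
    qed (use uc bwdAs eigAs in auto)
    have i2: "irred_tridiagonal (Wi * As * W)"
    proof (rule LP_to_irred[OF As A inj W Wi W1 W2 AW P2 Q2 PQ2 QP2 T2 D2,
          where mu = "\<lambda>i. \<theta> (d - i)" and rf = True and x = "\<lambda>i. u (d - i)"])
      show "\<forall>i\<le>d. u (d - i) \<in> carrier_vec (Suc d)" using uc by simp
      show "u (d - 0) \<noteq> 0\<^sub>v (Suc d)" using uc by simp
      show "A *\<^sub>v u (d - 0) = \<theta> (d - 0) \<cdot>\<^sub>v u (d - 0)" using eigA by simp
      show "\<forall>i. 1 \<le> i \<and> i \<le> d \<longrightarrow> (\<exists>b. A *\<^sub>v u (d - i) - \<theta> (d - i) \<cdot>\<^sub>v u (d - i) = b \<cdot>\<^sub>v u (d - (i - 1)))"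
      proof (intro allI impI)
        fix i assume i: "1 \<le> i \<and> i \<le> d"
        hence "d - i < d" "Suc (d - i) = d - (i - 1)" by auto
        thus "\<exists>b. A *\<^sub>v u (d - i) - \<theta> (d - i) \<cdot>\<^sub>v u (d - i) = b \<cdot>\<^sub>v u (d - (i - 1))" using bwdA by metis
      qed
      show "\<forall>i<d. \<exists>c t. c \<noteq> 0 \<and> u (d - Suc i) = c \<cdot>\<^sub>v (As *\<^sub>v u (d - i) - t \<cdot>\<^sub>v u (d - i))"
      proof (intro allI impI)
        fix i assume i: "i < d"
        hence j: "1 \<le> d - i \<and> d - i \<le> d" "d - i - 1 = d - Suc i" by auto
        thus "\<exists>c t. c \<noteq> 0 \<and> u (d - Suc i) = c \<cdot>\<^sub>v (As *\<^sub>v u (d - i) - t \<cdot>\<^sub>v u (d - i))"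
          using fwdAs by metis
      qed
    qed simp
    show "leonard_system d A As E Es" using LSiff i1 i2 by simp
  next
    assume "leonard_system d A As E Es"
    hence i1: "irred_tridiagonal (Wsi * A * Ws)" and i2: "irred_tridiagonal (Wi * As * W)" using LSiff by auto
    have d1: "diagonal_mat (Wsi * As * Ws)" using diag_conj[OF As Ws Wsi Ws2 AsWs] diagm_diagonal by simp
    have d2: "diagonal_mat (Wi * A * W)" using diag_conj[OF A W Wi W2 AW] diagm_diagonal by simp
    show "leonard_pair d A As" unfolding leonard_pair_def
      using Ws Wsi Ws1 Ws2 i1 d1 W Wi W1 W2 i2 d2 by blast
  qed
qed

end
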